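(* Let $\{x_j\}_{j\ge1}$ be a bounded sequence in $\mathbb{R}$ taking infinitely many distinct values, and $\{a_j\}_{j\ge1}$ a summable sequence of positive numbers. Let $\mu=\sum_{j\ge1}a_j\delta_{x_j}$ and $d=\sup_{j,k}|x_j-x_k|$. Then the monic orthogonal polynomials $P_n(x;d\mu)$ satisfy, for all $n\ge1$, $$\|P_n\|_{L^2(\mathbb{R},d\mu)}\le d^n\Bigl(\sum_{j=n+1}^\infty a_j\Bigr)^{1/2}.$$ *)

theory Defs
  imports "HOL-Analysis.Analysis" "HOL-Computational_Algebra.Polynomial"
begin

text \<open>Discrete measure mu = sum_j a_j delta_{x_j} (0-based indices here).
  L2(mu) inner product of polynomials, written out as the series it unfolds to.\<close>

definition disc_inner :: "(nat \<Rightarrow> real) \<Rightarrow> (nat \<Rightarrow> real) \<Rightarrow> real poly \<Rightarrow> real poly \<Rightarrow> real" where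
  "disc_inner a x p q = (\<Sum>j. a j * poly p (x j) * poly q (x j))"

definition disc_L2norm :: "(nat \<Rightarrow> real) \<Rightarrow> (nat \<Rightarrow> real) \<Rightarrow> real poly \<Rightarrow> real" where
  "disc_L2norm a x p = sqrt (\<Sum>j. a j * (poly p (x j))\<^sup>2)"

definition monic_orth_poly :: "(nat \<Rightarrow> real) \<Rightarrow> (nat \<Rightarrow> real) \<Rightarrow> nat \<Rightarrow> real poly \<Rightarrow> bool" where
  "monic_orth_poly a x n P \<longleftrightarrow>
     degree P = n \<and> lead_coeff P = 1 \<and>
     (\<forall>q. degree q < n \<longrightarrow> disc_inner a x P q = 0)"

end

theory Submission
  imports Defs
begin

lemma poly_bounded_on_range:
  fixes x :: "nat \<Rightarrow> real"
  assumes "bounded (range x)"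
  shows "\<exists>B. \<forall>j. \<bar>poly p (x j)\<bar> \<le> B"
proof -
  obtain R where R: "\<forall>y\<in>range x. norm y \<le> R" using assms bounded_pos by blast
  have "compact (poly p ` cball 0 R)"
    by (intro compact_continuous_image continuous_intros) auto
  then have "bounded (poly p ` cball 0 R)" by (rule compact_imp_bounded)
  then obtain B where B: "\<forall>y\<in>poly p ` cball 0 R. norm y \<le> B" using bounded_pos by blast
  have "\<forall>j. \<bar>poly p (x j)\<bar> \<le> B"
  proof
    fix j
    have "x j \<in> cball 0 R" using R by auto
    then show "\<bar>poly p (x j)\<bar> \<le> B" using B by auto
  qed
  then show ?thesis by blast
qed

lemma summable_prod_poly:
  fixes x a :: "nat \<Rightarrow> real"
  assumes "bounded (range x)" "\<And>j. a j > 0" "summable a"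
  shows "summable (\<lambda>j. a j * poly p (x j) * poly q (x j))"
proof -
  obtain B1 where B1: "\<forall>j. \<bar>poly p (x j)\<bar> \<le> B1" using poly_bounded_on_range[OF assms(1)] by blast
  obtain B2 where B2: "\<forall>j. \<bar>poly q (x j)\<bar> \<le> B2" using poly_bounded_on_range[OF assms(1)] by blast
  show ?thesis
  proof (rule summable_comparison_test)
    show "summable (\<lambda>j. a j * (B1 * B2))" using assms(3) by (rule summable_mult2)
    show "\<exists>N. \<forall>j\<ge>N. norm (a j * poly p (x j) * poly q (x j)) \<le> a j * (B1 * B2)"
    proof (intro exI allI impI)
      fix j
      have "\<bar>poly p (x j)\<bar> * \<bar>poly q (x j)\<bar> \<le> B1 * B2"
        proof (rule mult_mono)
        show "\<bar>poly p (x j)\<bar> \<le> B1" "\<bar>poly q (x j)\<bar> \<le> B2" using B1 B2 by auto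
        show "0 \<le> B1" using B1 abs_ge_zero order_trans by blast
      qed simp
      then have "a j * (\<bar>poly p (x j)\<bar> * \<bar>poly q (x j)\<bar>) \<le> a j * (B1 * B2)"
        using assms(2)[of j] by (simp add: mult_left_mono)
      then show "norm (a j * poly p (x j) * poly q (x j)) \<le> a j * (B1 * B2)"
        using assms(2)[of j] by (simp add: abs_mult mult.assoc)
    qed
  qed
qed

theorem theorem5p5:
  fixes x a :: "nat \<Rightarrow> real" and n :: nat and P :: "real poly"
  assumes "bounded (range x)"
    and "infinite (range x)"
    and "\<And>j. a j > 0"
    and "summable a"
    and "n \<ge> 1"
    and "monic_orth_poly a x n P"
  shows "disc_L2norm a x P \<le>
           (SUP jk\<in>(UNIV :: (nat \<times> nat) set). \<bar>x (fst jk) - x (snd jk)\<bar>) ^ n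
           * sqrt (\<Sum>j. a (j + n))"
proof -
  define d where "d = (SUP jk\<in>(UNIV :: (nat \<times> nat) set). \<bar>x (fst jk) - x (snd jk)\<bar>)"
  obtain R where R: "\<forall>y\<in>range x. norm y \<le> R" using assms(1) bounded_pos by blast
  have bdd: "bdd_above ((\<lambda>jk. \<bar>x (fst jk) - x (snd jk)\<bar>) ` UNIV)"
  proof (rule bdd_aboveI2)
    fix jk :: "nat \<times> nat"
    have "norm (x (fst jk)) \<le> R" "norm (x (snd jk)) \<le> R" using R by auto
    then show "\<bar>x (fst jk) - x (snd jk)\<bar> \<le> 2 * R" by auto
  qed
  have dle: "\<bar>x j - x k\<bar> \<le> d" for j k
    unfolding d_def using cSUP_upper[OF _ bdd, of "(j,k)"] by simp
  have d0: "0 \<le> d" using dle[of 0 0] by simp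
  define Q where "Q = (\<Prod>j<n. [:- x j, 1:])"
  have polyQ: "poly Q y = (\<Prod>j<n. y - x j)" for y
    unfolding Q_def by (simp add: poly_prod)
  have degQ: "degree Q = n" unfolding Q_def
    by (subst degree_prod_sum_eq) auto
  have lcQ: "lead_coeff Q = 1" unfolding Q_def by (simp add: lead_coeff_prod)
  have degP: "degree P = n" and lcP: "lead_coeff P = 1"
    and orth: "\<And>q. degree q < n \<Longrightarrow> disc_inner a x P q = 0"
    using assms(6) unfolding monic_orth_poly_def by auto
  have degQP: "degree (Q - P) < n"
  proof -
    have le: "degree (Q - P) \<le> n" using degQ degP degree_diff_le[of Q n P] by simp
    have c: "coeff (Q - P) n = 0" using lcQ lcP degQ degP by simp
    show ?thesis
    proof (rule ccontr)
      assume "\<not> degree (Q - P) < n"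
      then have "degree (Q - P) = n" using le by simp
      then have "Q - P = 0" using c by (metis leading_coeff_0_iff)
      then show False using \<open>degree (Q - P) = n\<close> assms(5) by simp
    qed
  qed
  have inner0: "(\<Sum>j. a j * poly P (x j) * poly (Q - P) (x j)) = 0"
    using orth[OF degQP] unfolding disc_inner_def .
  have sPP: "summable (\<lambda>j. a j * poly P (x j) * poly P (x j))"
    and sPQ: "summable (\<lambda>j. a j * poly P (x j) * poly (Q - P) (x j))"
    and sQQ: "summable (\<lambda>j. a j * poly Q (x j) * poly Q (x j))"
    using summable_prod_poly[OF assms(1,3,4)] by blast+
  have pt: "a j * (poly P (x j))\<^sup>2 + 2 * (a j * poly P (x j) * poly (Q - P) (x j))
            \<le> a j * (poly Q (x j))\<^sup>2" for j
  proof -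
    have "a j * (poly Q (x j))\<^sup>2 = a j * (poly P (x j))\<^sup>2
       + 2 * (a j * poly P (x j) * poly (Q - P) (x j)) + a j * (poly (Q - P) (x j))\<^sup>2"
      by (simp add: power2_eq_square algebra_simps)
    moreover have "0 \<le> a j * (poly (Q - P) (x j))\<^sup>2"
      using assms(3)[of j] by simp
    ultimately show ?thesis by linarith
  qed
  have sPP2: "summable (\<lambda>j. a j * (poly P (x j))\<^sup>2)"
    using sPP by (simp add: power2_eq_square mult.assoc)
  have sQQ2: "summable (\<lambda>j. a j * (poly Q (x j))\<^sup>2)"
    using sQQ by (simp add: power2_eq_square mult.assoc)
  have "(\<Sum>j. a j * (poly P (x j))\<^sup>2 + 2 * (a j * poly P (x j) * poly (Q - P) (x j)))
        \<le> (\<Sum>j. a j * (poly Q (x j))\<^sup>2)"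
    by (rule suminf_le[OF pt]) (intro summable_add sPP2 summable_mult sPQ, rule sQQ2)
  moreover have "(\<Sum>j. a j * (poly P (x j))\<^sup>2 + 2 * (a j * poly P (x j) * poly (Q - P) (x j)))
     = (\<Sum>j. a j * (poly P (x j))\<^sup>2)"
    using suminf_add[OF sPP2 summable_mult[OF sPQ, of 2]] suminf_mult[OF sPQ, of 2] inner0
    by simp
  ultimately have step1: "(\<Sum>j. a j * (poly P (x j))\<^sup>2) \<le> (\<Sum>j. a j * (poly Q (x j))\<^sup>2)"
    by simp
  have zero_init: "(\<Sum>i<n. a i * (poly Q (x i))\<^sup>2) = 0"
  proof (rule sum.neutral, intro ballI)
    fix i assume "i \<in> {..<n}"
    then have "poly Q (x i) = 0" unfolding polyQ by (intro prod_zero) auto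
    then show "a i * (poly Q (x i))\<^sup>2 = 0" by simp
  qed
  have step2: "(\<Sum>j. a j * (poly Q (x j))\<^sup>2) = (\<Sum>j. a (j + n) * (poly Q (x (j + n)))\<^sup>2)"
    using suminf_minus_initial_segment[OF sQQ2, of n] zero_init by simp
  have bndQ: "(poly Q (x i))\<^sup>2 \<le> (d ^ n)\<^sup>2" for i
  proof -
    have "\<bar>poly Q (x i)\<bar> = (\<Prod>j<n. \<bar>x i - x j\<bar>)" unfolding polyQ by (rule abs_prod)
    also have "\<dots> \<le> (\<Prod>j<n. d)" by (rule prod_mono) (simp add: dle)
    also have "\<dots> = d ^ n" by simp
    finally have "\<bar>poly Q (x i)\<bar> \<le> d ^ n" .
    then have "\<bar>poly Q (x i)\<bar>\<^sup>2 \<le> (d ^ n)\<^sup>2" by (rule power_mono) simp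
    then show ?thesis by simp
  qed
  have sa: "summable (\<lambda>j. a (j + n))" using assms(4) by (simp add: summable_iff_shift)
  have step3: "(\<Sum>j. a (j + n) * (poly Q (x (j + n)))\<^sup>2) \<le> (\<Sum>j. (d ^ n)\<^sup>2 * a (j + n))"
  proof (rule suminf_le)
    fix j show "a (j + n) * (poly Q (x (j + n)))\<^sup>2 \<le> (d ^ n)\<^sup>2 * a (j + n)"
      using bndQ[of "j+n"] assms(3)[of "j+n"] by (simp add: mult.commute mult_left_mono)
    show "summable (\<lambda>j. a (j + n) * (poly Q (x (j + n)))\<^sup>2)"
      using summable_iff_shift[of "\<lambda>j. a j * (poly Q (x j))\<^sup>2" n] sQQ2 by simp
    show "summable (\<lambda>j. (d ^ n)\<^sup>2 * a (j + n))" using sa by (rule summable_mult)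
  qed
  have step4: "(\<Sum>j. (d ^ n)\<^sup>2 * a (j + n)) = (d ^ n)\<^sup>2 * (\<Sum>j. a (j + n))"
    using suminf_mult[OF sa] by simp
  have "(\<Sum>j. a j * (poly P (x j))\<^sup>2) \<le> (d ^ n)\<^sup>2 * (\<Sum>j. a (j + n))"
    using step1 step2 step3 step4 by linarith
  then have "sqrt (\<Sum>j. a j * (poly P (x j))\<^sup>2) \<le> sqrt ((d ^ n)\<^sup>2 * (\<Sum>j. a (j + n)))"
    by (rule real_sqrt_le_mono)
  also have "\<dots> = d ^ n * sqrt (\<Sum>j. a (j + n))"
    using d0 by (simp add: real_sqrt_mult)
  finally show ?thesis unfolding disc_L2norm_def d_def .
qed

end
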